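(* Let $G$ be a finite simple connected graph. If $c_{\infty}(G)=1$ then every block of $G$ has domination number one.
   Context: Cops and Robber with an infinitely fast robber: the game is played on a graph $G$. A set of cops first choose initial vertices (several cops may share a vertex); then the robber, knowing their positions, chooses a vertex. Then the players move in alternating rounds, cops first. In the cops' turn each cop either stays or moves to an adjacent vertex; in the robber's turn she either stays or moves along any path of $G$ starting at her current vertex that contains no vertex currently occupied by a cop. The cops win if at some point a cop moves to the vertex occupied by the robber. $c_{\infty}(G)$ is the minimum number of cops for which the cops have a strategy that guarantees a win. A block of $G$ is either a maximal 2-connected subgraph of $G$ or an edge of $G$ not contained in any 2-connected subgraph. A block $B$ has domination number one if some vertex $x\in V(B)$ has every other vertex of $B$ adjacent to $x$. *)

theory Defs
  imports Main
begin

definition simple_graph :: "'a set \<Rightarrow> ('a \<Rightarrow> 'a \<Rightarrow> bool) \<Rightarrow> bool" where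
  "simple_graph V E \<longleftrightarrow> finite V \<and> (\<forall>x y. E x y \<longrightarrow> x \<in> V \<and> y \<in> V)
     \<and> (\<forall>x y. E x y \<longrightarrow> E y x) \<and> (\<forall>x. \<not> E x x)"

definition connected_on :: "('a \<Rightarrow> 'a \<Rightarrow> bool) \<Rightarrow> 'a set \<Rightarrow> bool" where
  "connected_on E S \<longleftrightarrow> S \<noteq> {} \<and>
     (\<forall>x\<in>S. \<forall>y\<in>S. (\<lambda>a b. E a b \<and> a \<in> S \<and> b \<in> S)\<^sup>*\<^sup>* x y)"

definition two_connected_on :: "('a \<Rightarrow> 'a \<Rightarrow> bool) \<Rightarrow> 'a set \<Rightarrow> bool" where
  "two_connected_on E S \<longleftrightarrow> finite S \<and> card S \<ge> 3 \<and> connected_on E S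
     \<and> (\<forall>v\<in>S. connected_on E (S - {v}))"

definition is_block :: "'a set \<Rightarrow> ('a \<Rightarrow> 'a \<Rightarrow> bool) \<Rightarrow> 'a set \<Rightarrow> bool" where
  "is_block V E B \<longleftrightarrow> B \<subseteq> V \<and>
     ((two_connected_on E B \<and> (\<forall>S. B \<subset> S \<and> S \<subseteq> V \<longrightarrow> \<not> two_connected_on E S))
      \<or> (\<exists>u v. B = {u, v} \<and> E u v \<and>
            (\<forall>S. {u, v} \<subseteq> S \<and> S \<subseteq> V \<longrightarrow> \<not> two_connected_on E S)))"

definition block_dom_one :: "('a \<Rightarrow> 'a \<Rightarrow> bool) \<Rightarrow> 'a set \<Rightarrow> bool" where
  "block_dom_one E B \<longleftrightarrow> (\<exists>x\<in>B. \<forall>y\<in>B. y \<noteq> x \<longrightarrow> E x y)"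

text \<open>Game with k cops (positions: a function on indices i < k) and an infinitely fast robber.\<close>
definition cop_step :: "('a \<Rightarrow> 'a \<Rightarrow> bool) \<Rightarrow> nat \<Rightarrow> (nat \<Rightarrow> 'a) \<Rightarrow> (nat \<Rightarrow> 'a) \<Rightarrow> bool" where
  "cop_step E k c c' \<longleftrightarrow> (\<forall>i<k. c' i = c i \<or> E (c i) (c' i))"

definition robber_step :: "('a \<Rightarrow> 'a \<Rightarrow> bool) \<Rightarrow> nat \<Rightarrow> (nat \<Rightarrow> 'a) \<Rightarrow> 'a \<Rightarrow> 'a \<Rightarrow> bool" where
  "robber_step E k c r r' \<longleftrightarrow>
     (\<lambda>x y. E x y \<and> x \<notin> c ` {..<k} \<and> y \<notin> c ` {..<k})\<^sup>*\<^sup>* r r'"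

text \<open>Capture in round n: after the cops' move C (n+1), some cop is on the robber's vertex r n.\<close>
definition cops_win :: "'a set \<Rightarrow> ('a \<Rightarrow> 'a \<Rightarrow> bool) \<Rightarrow> nat \<Rightarrow> bool" where
  "cops_win V E k \<longleftrightarrow>
    (\<exists>c0 \<sigma>. (\<forall>i<k. c0 i \<in> V)
       \<and> (\<forall>h. h \<noteq> [] \<longrightarrow> cop_step E k (fst (last h)) (\<sigma> h))
       \<and> (\<forall>C r. C 0 = c0
              \<and> (\<forall>n. C (Suc n) = \<sigma> (map (\<lambda>j. (C j, r j)) [0..<Suc n]))
              \<and> r 0 \<in> V
              \<and> (\<forall>n. robber_step E k (C (Suc n)) (r n) (r (Suc n)))
            \<longrightarrow> (\<exists>n. \<exists>i<k. C (Suc n) i = r n)))"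

definition c_infinity :: "'a set \<Rightarrow> ('a \<Rightarrow> 'a \<Rightarrow> bool) \<Rightarrow> nat" where
  "c_infinity V E = (LEAST k. cops_win V E k)"

end

theory Submission
  imports Defs
begin

primrec hist :: "(nat \<Rightarrow> 'a) \<Rightarrow> (((nat \<Rightarrow> 'a) \<times> 'a) list \<Rightarrow> (nat \<Rightarrow> 'a)) \<Rightarrow> ((nat \<Rightarrow> 'a) \<Rightarrow> 'a) \<Rightarrow> nat \<Rightarrow> ((nat \<Rightarrow> 'a) \<times> 'a) list" where
  "hist c0 \<sigma> f 0 = [(c0, f c0)]"
| "hist c0 \<sigma> f (Suc n) = hist c0 \<sigma> f n @ [(\<sigma> (hist c0 \<sigma> f n), f (\<sigma> (hist c0 \<sigma> f n)))]"

lemma hist_len[simp]: "length (hist c0 \<sigma> f n) = Suc n"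
  by (induction n) auto

lemma hist_nth: "m \<le> n \<Longrightarrow> hist c0 \<sigma> f n ! m = hist c0 \<sigma> f m ! m"
proof (induction n)
  case 0 then show ?case by simp
next
  case (Suc n)
  show ?case
  proof (cases "m = Suc n")
    case True then show ?thesis by simp
  next
    case False
    then have "m \<le> n" using Suc.prems by simp
    then have "hist c0 \<sigma> f (Suc n) ! m = hist c0 \<sigma> f n ! m" by (simp add: nth_append)
    then show ?thesis using Suc.IH \<open>m \<le> n\<close> by simp
  qed
qed

lemma hist_map:
  "map (\<lambda>j. (fst (hist c0 \<sigma> f j ! j), snd (hist c0 \<sigma> f j ! j))) [0..<Suc n] = hist c0 \<sigma> f n"
proof (rule nth_equalityI)
  show "length (map (\<lambda>j. (fst (hist c0 \<sigma> f j ! j), snd (hist c0 \<sigma> f j ! j))) [0..<Suc n]) = length (hist c0 \<sigma> f n)"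
    by simp
  fix i assume "i < length (map (\<lambda>j. (fst (hist c0 \<sigma> f j ! j), snd (hist c0 \<sigma> f j ! j))) [0..<Suc n])"
  then have i: "i < Suc n" by simp
  have "map (\<lambda>j. (fst (hist c0 \<sigma> f j ! j), snd (hist c0 \<sigma> f j ! j))) [0..<Suc n] ! i = hist c0 \<sigma> f i ! i"
    using i by (simp del: upt_Suc)
  also have "\<dots> = hist c0 \<sigma> f n ! i" using hist_nth[of i n c0 \<sigma> f] i by simp
  finally show "map (\<lambda>j. (fst (hist c0 \<sigma> f j ! j), snd (hist c0 \<sigma> f j ! j))) [0..<Suc n] ! i = hist c0 \<sigma> f n ! i" .
qed

lemma hist_ne[simp]: "hist c0 \<sigma> f n \<noteq> []"
  by (cases n) auto

lemma hist_last: "last (hist c0 \<sigma> f n) = hist c0 \<sigma> f n ! n"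
  by (simp add: last_conv_nth)

lemma hist_Suc: "hist c0 \<sigma> f (Suc n) ! Suc n = (\<sigma> (hist c0 \<sigma> f n), f (\<sigma> (hist c0 \<sigma> f n)))"
  by (simp add: nth_append)

lemma robber_escapes:
  assumes cw: "cops_win V E 1"
    and conn: "\<And>p. connected_on E (B - {p})"
    and esc: "\<And>p. \<exists>y\<in>B. y \<noteq> p \<and> \<not> E p y"
    and BV: "B \<subseteq> V"
  shows False
proof -
  define g where "g p = (SOME y. y \<in> B \<and> y \<noteq> p \<and> \<not> E p y)" for p
  have g: "g p \<in> B \<and> g p \<noteq> p \<and> \<not> E p (g p)" for p
    unfolding g_def by (rule someI_ex) (use esc[of p] in blast)
  from cw obtain c0 \<sigma> where c0: "\<forall>i<1. c0 i \<in> V"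
    and st: "\<forall>h. h \<noteq> [] \<longrightarrow> cop_step E 1 (fst (last h)) (\<sigma> h)"
    and win: "\<forall>C r. C 0 = c0
              \<and> (\<forall>n. C (Suc n) = \<sigma> (map (\<lambda>j. (C j, r j)) [0..<Suc n]))
              \<and> r 0 \<in> V
              \<and> (\<forall>n. robber_step E 1 (C (Suc n)) (r n) (r (Suc n)))
            \<longrightarrow> (\<exists>n. \<exists>i<1. C (Suc n) i = r n)"
    unfolding cops_win_def by blast
  define f where "f c = g (c 0)" for c :: "nat \<Rightarrow> 'a"
  define C where "C j = fst (hist c0 \<sigma> f j ! j)" for j
  define r where "r j = snd (hist c0 \<sigma> f j ! j)" for j
  have hm: "map (\<lambda>j. (C j, r j)) [0..<Suc n] = hist c0 \<sigma> f n" for n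
    unfolding C_def r_def by (rule hist_map)
  have C0: "C 0 = c0" by (simp add: C_def)
  have CS: "C (Suc n) = \<sigma> (map (\<lambda>j. (C j, r j)) [0..<Suc n])" for n
    unfolding hm by (simp add: C_def nth_append)
  have rg: "r n = g (C n 0)" for n
    by (cases n) (simp_all add: r_def C_def f_def nth_append)
  have r0: "r 0 \<in> V" using rg[of 0] g BV by auto
  have step: "C (Suc n) 0 = C n 0 \<or> E (C n 0) (C (Suc n) 0)" for n
  proof -
    have "hist c0 \<sigma> f n \<noteq> []" by simp
    then have "cop_step E 1 (fst (last (hist c0 \<sigma> f n))) (\<sigma> (hist c0 \<sigma> f n))" using st by blast
    moreover have "fst (last (hist c0 \<sigma> f n)) = C n" by (simp add: hist_last C_def)
    moreover have "\<sigma> (hist c0 \<sigma> f n) = C (Suc n)" using CS hm by simp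
    ultimately show ?thesis unfolding cop_step_def by auto
  qed
  have ne: "C (Suc n) 0 \<noteq> r n" for n
    using step[of n] rg[of n] g[of "C n 0"] by auto
  have rs: "robber_step E 1 (C (Suc n)) (r n) (r (Suc n))" for n
  proof -
    let ?p = "C (Suc n) 0"
    have a: "r n \<in> B - {?p}" using ne[of n] rg[of n] g by auto
    have b: "r (Suc n) \<in> B - {?p}" using rg[of "Suc n"] g by auto
    have "(\<lambda>a b. E a b \<and> a \<in> B - {?p} \<and> b \<in> B - {?p})\<^sup>*\<^sup>* (r n) (r (Suc n))"
      using conn[of ?p] a b unfolding connected_on_def by blast
    then have "(\<lambda>x y. E x y \<and> x \<notin> C (Suc n) ` {..<1} \<and> y \<notin> C (Suc n) ` {..<1})\<^sup>*\<^sup>* (r n) (r (Suc n))"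
      by (rule rtranclp_mono[THEN predicate2D, rotated]) auto
    then show ?thesis unfolding robber_step_def .
  qed
  have "\<exists>n. \<exists>i<1. C (Suc n) i = r n"
    using win[rule_format, of C r] C0 CS r0 rs by blast
  then show False using ne by auto
qed

lemma conn_insert:
  assumes sym: "\<And>x y. E x y \<Longrightarrow> E y x" and c: "connected_on E S" and s: "s \<in> S" "E x s"
  shows "connected_on E (insert x S)"
proof -
  let ?R = "\<lambda>a b. E a b \<and> a \<in> S \<and> b \<in> S"
  let ?R' = "\<lambda>a b. E a b \<and> a \<in> insert x S \<and> b \<in> insert x S"
  have m: "?R\<^sup>*\<^sup>* a b \<Longrightarrow> ?R'\<^sup>*\<^sup>* a b" for a b
    by (rule rtranclp_mono[THEN predicate2D, rotated]) auto
  have xs: "?R'\<^sup>*\<^sup>* x s" using s by auto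
  have sx: "?R'\<^sup>*\<^sup>* s x" using s sym by auto
  show ?thesis unfolding connected_on_def
  proof (intro conjI ballI)
    fix a b assume a: "a \<in> insert x S" and b: "b \<in> insert x S"
    have ab: "a \<in> S \<Longrightarrow> b \<in> S \<Longrightarrow> ?R'\<^sup>*\<^sup>* a b" for a b
      using c m unfolding connected_on_def by blast
    show "?R'\<^sup>*\<^sup>* a b"
    proof (cases "a = x")
      case True
      then show ?thesis
      proof (cases "b = x")
        case False then have "b \<in> S" using b by auto
        then show ?thesis using True xs ab[of s b] s by (meson rtranclp_trans)
      qed simp
    next
      case False then have aS: "a \<in> S" using a by auto
      show ?thesis
      proof (cases "b = x")
        case True then show ?thesis using sx ab[of a s] aS s by (meson rtranclp_trans)
      next
        case False then show ?thesis using aS b ab by auto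
      qed
    qed
  qed simp
qed

theorem mainTheorem9:
  fixes V :: "'a set" and E :: "'a \<Rightarrow> 'a \<Rightarrow> bool"
  assumes "simple_graph V E"
    and "connected_on E V"
    and "c_infinity V E = 1"
    and "is_block V E B"
  shows "block_dom_one E B"
proof -
  have fin: "finite V" and inV: "\<And>x y. E x y \<Longrightarrow> x \<in> V \<and> y \<in> V"
    and sym: "\<And>x y. E x y \<Longrightarrow> E y x"
    using assms(1) unfolding simple_graph_def by auto
  have cw: "cops_win V E 1"
  proof -
    obtain xs where xs: "set xs = V" using fin finite_list by blast
    have "cops_win V E (length xs)"
      unfolding cops_win_def
      apply (intro exI[of _ "\<lambda>i. xs ! i"] exI[of _ "\<lambda>h. fst (last h)"] conjI)
        apply (use xs in auto)[1]
       apply (simp add: cop_step_def)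
      apply (intro allI impI, elim conjE)
      subgoal premises P for C r
      proof -
        have "C (Suc 0) = C 0" using P(2)[rule_format, of 0] by simp
        moreover obtain i where "i < length xs" "xs ! i = r 0" using P(3) xs by (metis in_set_conv_nth)
        ultimately have "C (Suc 0) i = r 0" "i < length xs" using P(1) by auto
        then show ?thesis by blast
      qed
      done
    then have "cops_win V E (LEAST k. cops_win V E k)" by (rule LeastI)
    then show ?thesis using assms(3) unfolding c_infinity_def by simp
  qed
  show ?thesis
  proof (rule ccontr)
    assume nd: "\<not> block_dom_one E B"
    from assms(4) have BV: "B \<subseteq> V" unfolding is_block_def by auto
    from assms(4) nd have tc: "two_connected_on E B"
      and mx: "\<And>S. B \<subset> S \<Longrightarrow> S \<subseteq> V \<Longrightarrow> \<not> two_connected_on E S"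
      unfolding is_block_def block_dom_one_def by blast+
    have finB: "finite B" and c3: "card B \<ge> 3" and cB: "connected_on E B"
      and cBv: "\<And>v. v \<in> B \<Longrightarrow> connected_on E (B - {v})"
      using tc unfolding two_connected_on_def by auto
    have conn: "connected_on E (B - {p})" for p
      using cBv[of p] cB by (cases "p \<in> B") auto
    have other: "\<exists>s\<in>B. s \<noteq> v" for v
    proof (rule ccontr)
      assume "\<not> ?thesis" then have "B \<subseteq> {v}" by auto
      then have "card B \<le> 1" using card_mono[of "{v}" B] by simp
      then show False using c3 by simp
    qed
    have esc: "\<exists>y\<in>B. y \<noteq> p \<and> \<not> E p y" for p
    proof (cases "p \<in> B")
      case True then show ?thesis using nd unfolding block_dom_one_def by blast
    next
      case False
      show ?thesis
      proof (rule ccontr)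
        assume "\<not> ?thesis"
        then have adj: "\<And>y. y \<in> B \<Longrightarrow> E p y" using False by auto
        obtain s where s: "s \<in> B" using other by blast
        have pV: "p \<in> V" using adj[OF s] inV by blast
        have "two_connected_on E (insert p B)"
          unfolding two_connected_on_def
        proof (intro conjI ballI)
          show "finite (insert p B)" using finB by simp
          show "3 \<le> card (insert p B)" using finB False c3 by simp
          show "connected_on E (insert p B)" using conn_insert[OF sym cB s adj[OF s]] by blast
          fix v assume v: "v \<in> insert p B"
          show "connected_on E (insert p B - {v})"
          proof (cases "v = p")
            case True then show ?thesis using False cB by simp
          next
            case vp: False
            then have vB: "v \<in> B" using v by simp
            obtain t where t: "t \<in> B" "t \<noteq> v" using other by blast
            have "connected_on E (insert p (B - {v}))"
              by (rule conn_insert[OF sym cBv[OF vB]]) (use t adj in auto)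
            moreover have "insert p B - {v} = insert p (B - {v})" using vp by auto
            ultimately show ?thesis by simp
          qed
        qed
        moreover have "B \<subset> insert p B" using False by auto
        moreover have "insert p B \<subseteq> V" using pV BV by auto
        ultimately show False using mx by blast
      qed
    qed
    show False by (rule robber_escapes[OF cw conn esc BV])
  qed
qed

end
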